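(* Let $m\ge 2$ be even, $n\ge 2$, and let $\mathcal{A}$ be a completely positive tensor of order $m$ and dimension $n$. Then $\mathcal{A}$ is positive definite if and only if $\mathcal{A}$ is strongly completely positive.
   Context: For a vector $\mathbf{u}\in\mathbb{R}^n$, $\mathbf{u}^m$ denotes the symmetric $m$th order $n$-dimensional tensor with entries $u_{i_1}\cdots u_{i_m}$. A symmetric $m$th order $n$-dimensional tensor $\mathcal{A}$ is completely positive if there are nonnegative vectors $\mathbf{u}^{(1)},\dots,\mathbf{u}^{(r)}\in\mathbb{R}^n$ with $\mathcal{A}=(\mathbf{u}^{(1)})^m+\dots+(\mathbf{u}^{(r)})^m$; it is strongly completely positive if such a decomposition exists with $\{\mathbf{u}^{(1)},\dots,\mathbf{u}^{(r)}\}$ spanning $\mathbb{R}^n$. For $m$ even, $\mathcal{A}$ is positive definite if $\mathcal{A}\mathbf{x}^m=\sum_{i_1,\dots,i_m}a_{i_1\dots i_m}x_{i_1}\cdots x_{i_m}>0$ for all nonzero $\mathbf{x}\in\mathbb{R}^n$. *)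

theory Defs
  imports "HOL-Analysis.Analysis"
begin

text \<open>Tensors of order m and dimension n = CARD('n): functions on index lists
  (i_1,...,i_m) of length m with entries in the index type 'n. Values on lists of
  other lengths are irrelevant.\<close>

type_synonym 'n tensor = "'n list \<Rightarrow> real"

definition idx :: "nat \<Rightarrow> 'n list set" where
  "idx m = {is. length is = m}"

definition symmetric_tensor :: "nat \<Rightarrow> 'n tensor \<Rightarrow> bool" where
  "symmetric_tensor m A \<longleftrightarrow>
     (\<forall>is\<in>idx m. \<forall>js\<in>idx m. mset is = mset js \<longrightarrow> A is = A js)"

definition tpow :: "(real^'n::finite) \<Rightarrow> 'n tensor" where
  "tpow u = (\<lambda>is. prod_list (map (\<lambda>i. u $ i) is))"

definition nonneg_vec :: "(real^'n::finite) \<Rightarrow> bool" where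
  "nonneg_vec u \<longleftrightarrow> (\<forall>i. 0 \<le> u $ i)"

definition cp_decomp :: "nat \<Rightarrow> 'n::finite tensor \<Rightarrow> (real^'n) list \<Rightarrow> bool" where
  "cp_decomp m A us \<longleftrightarrow> (\<forall>u\<in>set us. nonneg_vec u) \<and>
     (\<forall>is\<in>idx m. A is = (\<Sum>u\<leftarrow>us. tpow u is))"

definition completely_positive :: "nat \<Rightarrow> 'n::finite tensor \<Rightarrow> bool" where
  "completely_positive m A \<longleftrightarrow> symmetric_tensor m A \<and> (\<exists>us. cp_decomp m A us)"

definition strongly_completely_positive :: "nat \<Rightarrow> 'n::finite tensor \<Rightarrow> bool" where
  "strongly_completely_positive m A \<longleftrightarrow> symmetric_tensor m A \<and>
     (\<exists>us. cp_decomp m A us \<and> span (set us) = UNIV)"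

definition tensor_form :: "nat \<Rightarrow> 'n::finite tensor \<Rightarrow> real^'n \<Rightarrow> real" where
  "tensor_form m A x = (\<Sum>is\<in>idx m. A is * prod_list (map (\<lambda>i. x $ i) is))"

definition positive_definite :: "nat \<Rightarrow> 'n::finite tensor \<Rightarrow> bool" where
  "positive_definite m A \<longleftrightarrow> (\<forall>x. x \<noteq> 0 \<longrightarrow> tensor_form m A x > 0)"

end

theory Submission
  imports Defs
begin

lemma idx_Suc: "idx (Suc m) = (\<lambda>(i, is). i # is) ` (UNIV \<times> idx m)"
  unfolding idx_def
  by (auto simp: image_iff length_Suc_conv)

lemma finite_idx: "finite (idx m :: ('n::finite) list set)"
proof -
  have "idx m = {xs :: 'n list. set xs \<subseteq> UNIV \<and> length xs = m}"
    by (auto simp: idx_def)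
  then show ?thesis using finite_lists_length_eq[of "UNIV :: 'n set" m] by simp
qed

lemma sum_idx_prod:
  fixes f :: "'n::finite \<Rightarrow> real"
  shows "(\<Sum>is\<in>idx m. prod_list (map f is)) = (\<Sum>i\<in>UNIV. f i) ^ m"
proof (induction m)
  case 0
  have "idx 0 = {[] :: 'n list}" by (auto simp: idx_def)
  then show ?case by simp
next
  case (Suc m)
  have inj: "inj_on (\<lambda>(i, is). i # is) (UNIV \<times> (idx m :: 'n list set))"
    by (auto simp: inj_on_def)
  have "(\<Sum>is\<in>idx (Suc m). prod_list (map f is))
      = (\<Sum>p\<in>UNIV \<times> idx m. prod_list (map f ((\<lambda>(i, is). i # is) p)))"
    unfolding idx_Suc by (subst sum.reindex[OF inj]) (simp add: comp_def)
  also have "\<dots> = (\<Sum>i\<in>UNIV. \<Sum>is\<in>idx m. f i * prod_list (map f is))"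
    unfolding sum.cartesian_product by (intro sum.cong) auto
  also have "\<dots> = (\<Sum>i\<in>UNIV. f i * (\<Sum>is\<in>idx m. prod_list (map f is)))"
    by (simp add: sum_distrib_left)
  also have "\<dots> = (\<Sum>i\<in>UNIV. f i) * (\<Sum>i\<in>UNIV. f i) ^ m"
    by (simp add: Suc sum_distrib_right)
  finally show ?case by simp
qed

lemma swap_sum_list:
  fixes I :: "'a set" and f :: "'b \<Rightarrow> 'a \<Rightarrow> real"
  shows "(\<Sum>is\<in>I. (\<Sum>u\<leftarrow>us. f u is) * c is) = (\<Sum>u\<leftarrow>us. \<Sum>is\<in>I. f u is * c is)"
proof (induction us)
  case (Cons a us)
  have "(\<Sum>is\<in>I. (\<Sum>u\<leftarrow>a # us. f u is) * c is) = (\<Sum>is\<in>I. f a is * c is + (\<Sum>u\<leftarrow>us. f u is) * c is)"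
    by (rule sum.cong) (auto simp: algebra_simps)
  also have "\<dots> = (\<Sum>is\<in>I. f a is * c is) + (\<Sum>is\<in>I. (\<Sum>u\<leftarrow>us. f u is) * c is)"
    by (rule sum.distrib)
  finally show ?case using Cons by simp
qed simp

lemma form_decomp:
  assumes "cp_decomp m A us"
  shows "tensor_form m A x = (\<Sum>u\<leftarrow>us. (u \<bullet> x) ^ m)"
proof -
  have "tensor_form m A x = (\<Sum>is\<in>idx m. (\<Sum>u\<leftarrow>us. tpow u is) * prod_list (map (\<lambda>i. x $ i) is))"
    unfolding tensor_form_def using assms by (auto simp: cp_decomp_def intro!: sum.cong)
  also have "\<dots> = (\<Sum>u\<leftarrow>us. \<Sum>is\<in>idx m. tpow u is * prod_list (map (\<lambda>i. x $ i) is))"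
    by (rule swap_sum_list)
  also have "\<dots> = (\<Sum>u\<leftarrow>us. (u \<bullet> x) ^ m)"
  proof -
    have "\<And>u. (\<Sum>is\<in>idx m. tpow u is * prod_list (map (\<lambda>i. x $ i) is))
           = (\<Sum>is\<in>idx m. prod_list (map (\<lambda>i. u $ i * x $ i) is))"
    proof -
      fix u :: "real^'a"
      have "\<And>is. tpow u is * prod_list (map (\<lambda>i. x $ i) is) = prod_list (map (\<lambda>i. u $ i * x $ i) is)"
        unfolding tpow_def by (induct_tac "is") (simp_all add: algebra_simps)
      then show "?thesis u" by simp
    qed
    then show ?thesis by (simp add: sum_idx_prod inner_vec_def)
  qed
  finally show ?thesis .
qed

lemma sum_list_even_pow_nonneg:
  assumes "even m"
  shows "(\<Sum>u\<leftarrow>us. (u \<bullet> (x::real^'n::finite)) ^ m) \<ge> 0"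
  using assms by (induction us) (simp_all add: zero_le_even_power)

lemma sum_list_even_pow_zero:
  assumes "even m" "m \<ge> 2" "(\<Sum>u\<leftarrow>us. (u \<bullet> (x::real^'n::finite)) ^ m) = 0"
  shows "\<forall>u\<in>set us. u \<bullet> x = 0"
  using assms
proof (induction us)
  case Nil then show ?case by simp
next
  case (Cons a us)
  have a: "(a \<bullet> x) ^ m \<ge> 0" using Cons.prems by (simp add: zero_le_even_power)
  have b: "(\<Sum>u\<leftarrow>us. (u \<bullet> x) ^ m) \<ge> 0" using sum_list_even_pow_nonneg Cons.prems by blast
  have s: "(a \<bullet> x) ^ m + (\<Sum>u\<leftarrow>us. (u \<bullet> x) ^ m) = 0" using Cons.prems by simp
  have "(a \<bullet> x) ^ m = 0" "(\<Sum>u\<leftarrow>us. (u \<bullet> x) ^ m) = 0" using a b s by linarith+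
  then have "a \<bullet> x = 0" using Cons.prems by (metis power_eq_0_iff)
  then show ?case using Cons \<open>(\<Sum>u\<leftarrow>us. (u \<bullet> x) ^ m) = 0\<close> by simp
qed

theorem theorem2p2:
  fixes A :: "'n::finite tensor" and m :: nat
  assumes "even m" and "m \<ge> 2" and "CARD('n) \<ge> 2"
    and "completely_positive m A"
  shows "positive_definite m A \<longleftrightarrow> strongly_completely_positive m A"
proof
  assume pd: "positive_definite m A"
  obtain us where sym: "symmetric_tensor m A" and d: "cp_decomp m A us"
    using assms(4) by (auto simp: completely_positive_def)
  have "span (set us) = UNIV"
  proof (rule ccontr)
    assume "span (set us) \<noteq> UNIV"
    then have "span (set us) \<subset> span (UNIV :: (real^'n) set)" by auto
    then obtain x :: "real^'n" where x: "x \<noteq> 0" "\<And>y. y \<in> span (set us) \<Longrightarrow> orthogonal x y"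
      by (rule orthogonal_to_subspace_exists_gen) auto
    have "\<forall>u\<in>set us. u \<bullet> x = 0"
      using x(2) span_base by (metis orthogonal_def inner_commute)
    then have "(\<Sum>u\<leftarrow>us. (u \<bullet> x) ^ m) = 0"
      using assms(2) by (induction us) auto
    then have "tensor_form m A x = 0" using form_decomp[OF d] by simp
    with pd x(1) show False by (auto simp: positive_definite_def)
  qed
  with sym d show "strongly_completely_positive m A"
    by (auto simp: strongly_completely_positive_def)
next
  assume "strongly_completely_positive m A"
  then obtain us where d: "cp_decomp m A us" and sp: "span (set us) = UNIV"
    by (auto simp: strongly_completely_positive_def)
  show "positive_definite m A"
    unfolding positive_definite_def
  proof (intro allI impI)
    fix x :: "real^'n" assume x: "x \<noteq> 0"
    have ge: "tensor_form m A x \<ge> 0"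
      using form_decomp[OF d] sum_list_even_pow_nonneg[OF assms(1)] by simp
    show "tensor_form m A x > 0"
    proof (rule ccontr)
      assume "\<not> tensor_form m A x > 0"
      then have "(\<Sum>u\<leftarrow>us. (u \<bullet> x) ^ m) = 0" using ge form_decomp[OF d] by simp
      then have z: "\<forall>u\<in>set us. u \<bullet> x = 0"
        using sum_list_even_pow_zero assms(1,2) by blast
      have "\<forall>y\<in>span (set us). y \<bullet> x = 0"
      proof
        fix y assume "y \<in> span (set us)"
        then show "y \<bullet> x = 0"
        proof (induction rule: span_induct_alt)
          case base then show ?case by simp
        next
          case (step c u y) then show ?case using z by (simp add: inner_add_left)
        qed
      qed
      then have "x \<bullet> x = 0" using sp by auto
      with x show False by simp
    qed
  qed
qed

end
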